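(* Let $f:\mathbb{R}^n\to\mathbb{R}\cup\{+\infty\}$ be closed and convex, let $X\in\mathbb{R}^{n\times m}$ have rank $r$ with compact SVD $X=U_r\Sigma_r V_r^\top$, let $\gamma>0$ and $\lambda>0$. Define $$p_{\rm pen}(\lambda)=\min_{w\in\mathbb{R}^m}\ f(Xw)+\tfrac{\gamma}{2}\|w\|_2^2+\lambda\|w\|_0,$$ $$p^{**}_{\rm pen}(\lambda)=\min_{v\in\mathbb{R}^m,\ u\in[0,1]^m}\ f(XD(u)v)+\tfrac{\gamma}{2}v^\top D(u)v+\lambda\mathbf 1^\top u .$$ Let $(v^*,u^* )$ be an optimal solution of the latter problem with optimal value $t^*$, let $z^*=\Sigma_rV_r^\top D(u^* )v^*$, let $\ell_i$ be the $i$-th column of $\Sigma_rV_r^\top$, and let $c\sim\mathcal N(0,I_m)$. Consider the linear program in $u\in\mathbb{R}^m$: $$\min\ c^\top u\quad\text{s.t.}\quad f(U_rz^* )+\sum_{i=1}^m\Big(u_i\tfrac{\gamma}{2}(v_i^* )^2+\lambda u_i\Big)=t^*,\quad \sum_{i=1}^m u_i\ell_i v_i^*=z^*,\quad u\in[0,1]^m.$$ Then, with probability one, from an optimal basic feasible solution $\bar u$ of this linear program one can construct a primal feasible point (namely, with $S=\{i:\bar u_i\notin\{0,1\}\}$, $\tilde u_i=1,\tilde v_i=\bar u_iv_i^*$ for $i\in S$, $\tilde u_i=\bar u_i,\tilde v_i=v_i^*$ for $i\notin S$, and $w=D(\tilde u)\tilde v$) whose objective value $\mathrm{OPT}=f(Xw)+\tfrac{\gamma}{2}\|w\|_2^2+\lambda\mathbf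 1^\top\tilde u$ satisfies $$p^{**}_{\rm pen}(\lambda)\le p_{\rm pen}(\lambda)\le \mathrm{OPT}\le p^{**}_{\rm pen}(\lambda)+\lambda(r+1).$$
   Context: $\|w\|_0$ denotes the number of nonzero entries of $w$; $D(u)=\mathrm{diag}(u_1,\dots,u_m)$; $\mathbf 1$ is the all-ones vector. A function is closed if it is lower semicontinuous. Note $p_{\rm pen}(\lambda)=\min_{v\in\mathbb{R}^m,u\in\{0,1\}^m} f(XD(u)v)+\tfrac{\gamma}{2}v^\top D(u)v+\lambda\mathbf 1^\top u$. *)

theory Defs
  imports "HOL-Analysis.Analysis" "HOL-Probability.Probability"
begin

text \<open>Closed (= lower semicontinuous) extended-real-valued function on a type.\<close>
definition closed_fun :: "('a::topological_space \<Rightarrow> ereal) \<Rightarrow> bool" where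
  "closed_fun f \<longleftrightarrow> (\<forall>a::ereal. open {x. a < f x})"

definition convex_fun :: "('a::real_vector \<Rightarrow> ereal) \<Rightarrow> bool" where
  "convex_fun f \<longleftrightarrow> convex {(x, t::real). f x \<le> ereal t}"

definition Dmat :: "real^'m \<Rightarrow> real^'m^'m" where
  "Dmat u = (\<chi> i j. if i = j then u $ i else 0)"

definition l0norm :: "real^'m \<Rightarrow> nat" where
  "l0norm w = card {i. w $ i \<noteq> 0}"

definition unit_box :: "(real^'m) set" where
  "unit_box = {u. \<forall>i. 0 \<le> u $ i \<and> u $ i \<le> 1}"

definition p_pen :: "(real^'n \<Rightarrow> ereal) \<Rightarrow> real^'m^'n \<Rightarrow> real \<Rightarrow> real \<Rightarrow> ereal" where
  "p_pen f X gam lam = (INF w. f (X *v w) + ereal (gam/2 * (norm w)^2) + ereal (lam * real (l0norm w)))"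

definition relax_obj :: "(real^'n \<Rightarrow> ereal) \<Rightarrow> real^'m^'n \<Rightarrow> real \<Rightarrow> real \<Rightarrow> real^'m \<Rightarrow> real^'m \<Rightarrow> ereal" where
  "relax_obj f X gam lam v u = f (X *v (Dmat u *v v)) + ereal (gam/2 * (v \<bullet> (Dmat u *v v)))
      + ereal (lam * (\<Sum>i\<in>UNIV. u $ i))"

definition p_pen_relax :: "(real^'n \<Rightarrow> ereal) \<Rightarrow> real^'m^'n \<Rightarrow> real \<Rightarrow> real \<Rightarrow> ereal" where
  "p_pen_relax f X gam lam = (INF p \<in> UNIV \<times> unit_box. relax_obj f X gam lam (fst p) (snd p))"

definition compact_svd :: "real^'m^'n \<Rightarrow> real^'r^'n \<Rightarrow> real^'r^'r \<Rightarrow> real^'r^'m \<Rightarrow> bool" where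
  "compact_svd X U S V \<longleftrightarrow> CARD('r) = rank X \<and> X = U ** S ** transpose V
     \<and> transpose U ** U = mat 1 \<and> transpose V ** V = mat 1
     \<and> (\<forall>i j. i \<noteq> j \<longrightarrow> S $ i $ j = 0) \<and> (\<forall>i. S $ i $ i > 0)"

text \<open>Feasible set of the LP (in u), given data: f(U z*), t*, v*, L = Sigma_r V_r^T, z*.\<close>
definition lp_feasible :: "ereal \<Rightarrow> ereal \<Rightarrow> real \<Rightarrow> real \<Rightarrow> real^'m \<Rightarrow> real^'m^'r \<Rightarrow> real^'r \<Rightarrow> real^'m \<Rightarrow> bool" where
  "lp_feasible fz t gam lam vs L z u \<longleftrightarrow>
     fz + ereal (\<Sum>i\<in>UNIV. u $ i * (gam/2) * (vs $ i)^2 + lam * u $ i) = t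
     \<and> (\<Sum>i\<in>UNIV. (u $ i * vs $ i) *\<^sub>R column i L) = z
     \<and> u \<in> unit_box"

text \<open>Basic feasible solution: feasible, and the gradients of the active constraints
  (both equality constraints and the tight bound constraints) span R^m.\<close>
definition lp_bfs :: "ereal \<Rightarrow> ereal \<Rightarrow> real \<Rightarrow> real \<Rightarrow> real^'m \<Rightarrow> real^'m^'r \<Rightarrow> real^'r \<Rightarrow> real^'m \<Rightarrow> bool" where
  "lp_bfs fz t gam lam vs L z u \<longleftrightarrow> lp_feasible fz t gam lam vs L z u \<and>
     span ({\<chi> i. (gam/2) * (vs $ i)^2 + lam}
           \<union> {(\<chi> i. L $ k $ i * vs $ i) | k. True}
           \<union> {axis i 1 | i. u $ i = 0 \<or> u $ i = 1}) = UNIV"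

definition lp_optimal_bfs :: "real^'m \<Rightarrow> ereal \<Rightarrow> ereal \<Rightarrow> real \<Rightarrow> real \<Rightarrow> real^'m \<Rightarrow> real^'m^'r \<Rightarrow> real^'r \<Rightarrow> real^'m \<Rightarrow> bool" where
  "lp_optimal_bfs c fz t gam lam vs L z u \<longleftrightarrow> lp_bfs fz t gam lam vs L z u \<and>
     (\<forall>u'. lp_feasible fz t gam lam vs L z u' \<longrightarrow> c \<bullet> u \<le> c \<bullet> u')"

definition std_gaussian :: "(real^'m) measure" where
  "std_gaussian = density lborel
     (\<lambda>c. ennreal ((2*pi) powr (- real CARD('m) / 2) * exp (- ((norm c) ^ 2) / 2)))"

end

theory Submission
  imports Defs
begin

lemma Dmat_mult: "(Dmat u *v v) $ i = u $ i * v $ i"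
proof -
  have "(Dmat u *v v) $ i = (\<Sum>j\<in>UNIV. (if i = j then u $ i * v $ j else 0))"
    unfolding Dmat_def matrix_vector_mult_def by (simp only: vec_lambda_beta, rule sum.cong) auto
  thus ?thesis by simp
qed

lemma norm_sq_vec: "(norm (w::real^'m))^2 = (\<Sum>i\<in>UNIV. (w $ i)^2)"
  by (simp add: norm_vec_def L2_set_def sum_nonneg)

lemma dim_cart: "dim (UNIV :: (real^'m) set) = CARD('m)"
  by (simp add: dim_UNIV)

lemma relax_le_pen: fixes X :: "real^'m^'n" shows "p_pen_relax f X gam lam \<le> p_pen f X gam lam"
  unfolding p_pen_def p_pen_relax_def
proof (rule INF_greatest)
  fix w :: "real^'m"
  define u :: "real^'m" where "u = (\<chi> i. if w $ i = 0 then 0 else 1)"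
  have ub: "u \<in> unit_box" unfolding unit_box_def u_def by auto
  have dw: "Dmat u *v w = w" by (simp add: vec_eq_iff Dmat_mult u_def)
  have "w \<bullet> w = (norm w)^2" by (simp add: power2_norm_eq_inner)
  moreover have "(\<Sum>i\<in>UNIV. u $ i) = real (l0norm w)"
    unfolding u_def l0norm_def by (simp add: sum.If_cases Collect_neg_eq)
  ultimately have "relax_obj f X gam lam w u = f (X *v w) + ereal (gam/2 * (norm w)^2) + ereal (lam * real (l0norm w))"
    unfolding relax_obj_def dw by simp
  moreover have "(w,u) \<in> UNIV \<times> unit_box" using ub by simp
  ultimately show "(INF p \<in> UNIV \<times> unit_box. relax_obj f X gam lam (fst p) (snd p)) \<le> f (X *v w) + ereal (gam/2 * (norm w)^2) + ereal (lam * real (l0norm w))"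
    by (metis (no_types, lifting) INF_lower fst_conv snd_conv)
qed

lemma pen_le:
  assumes ut01: "\<forall>i. ut $ i = 0 \<or> ut $ i = 1" and lam: "lam > 0"
  shows "p_pen f X gam lam \<le> f (X *v (Dmat ut *v vt)) + ereal (gam/2 * (norm (Dmat ut *v vt))^2) + ereal (lam * (\<Sum>i\<in>UNIV. ut $ i))"
proof -
  define w where "w = Dmat ut *v vt"
  have "{i. w $ i \<noteq> 0} \<subseteq> {i. ut $ i = 1}" using ut01 by (auto simp: w_def Dmat_mult)
  hence "l0norm w \<le> card {i. ut $ i = 1}" unfolding l0norm_def by (simp add: card_mono)
  also have "real (card {i. ut $ i = 1}) = (\<Sum>i\<in>UNIV. ut $ i)"
  proof -
    have "(\<Sum>i\<in>UNIV. ut $ i) = (\<Sum>i\<in>UNIV. if ut $ i = 1 then 1 else 0)"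
      by (rule sum.cong) (use ut01 in auto)
    thus ?thesis by (simp add: sum.If_cases)
  qed
  finally have "lam * real (l0norm w) \<le> lam * (\<Sum>i\<in>UNIV. ut $ i)"
    using lam by (smt (verit) mult_left_mono of_nat_mono)
  have "p_pen f X gam lam \<le> f (X *v w) + ereal (gam/2 * (norm w)^2) + ereal (lam * real (l0norm w))"
    unfolding p_pen_def by (rule INF_lower[OF UNIV_I])
  also have "\<dots> \<le> f (X *v w) + ereal (gam/2 * (norm w)^2) + ereal (lam * (\<Sum>i\<in>UNIV. ut $ i))"
    by (rule add_left_mono) (simp add: \<open>lam * real (l0norm w) \<le> _\<close>)
  finally show ?thesis unfolding w_def .
qed


lemma card_Sf_bound:
  fixes L :: "real^'m^'r" and ub vs :: "real^'m"
  assumes sp: "span ({a} \<union> {(\<chi> i. L $ k $ i * vs $ i) | k. True}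
           \<union> {axis i 1 | i. ub $ i = 0 \<or> ub $ i = 1}) = UNIV"
  shows "card {i. ub $ i \<noteq> 0 \<and> ub $ i \<noteq> 1} \<le> CARD('r) + 1"
proof -
  define Sf where "Sf = {i. ub $ i \<noteq> 0 \<and> ub $ i \<noteq> 1}"
  define A1 :: "(real^'m) set" where "A1 = insert a (range (\<lambda>k. (\<chi> i. L $ k $ i * vs $ i)))"
  define B :: "(real^'m) set" where "B = (\<lambda>i. axis i 1) ` (- Sf)"
  have eq: "({a} \<union> {(\<chi> i. L $ k $ i * vs $ i) | k. True}
           \<union> {axis i 1 | i. ub $ i = 0 \<or> ub $ i = 1}) = A1 \<union> B"
    unfolding A1_def B_def Sf_def by auto
  have fin: "finite (A1 \<union> B)" unfolding A1_def B_def by simp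
  have "CARD('m) = dim (UNIV :: (real^'m) set)" by (simp add: dim_UNIV)
  also have "\<dots> \<le> card (A1 \<union> B)" using sp eq fin by (intro dim_le_card) auto
  also have "\<dots> \<le> card A1 + card B" by (rule card_Un_le)
  also have "card A1 \<le> CARD('r) + 1"
  proof -
    have "card (range (\<lambda>k. (\<chi> i. L $ k $ i * vs $ i))) \<le> CARD('r)"
      by (rule card_image_le) simp
    moreover have "card (insert a (range (\<lambda>k. (\<chi> i. L $ k $ i * vs $ i)))) \<le> Suc (card (range (\<lambda>k. (\<chi> i. L $ k $ i * vs $ i))))"
      by (rule card_insert_le_m1) auto
    ultimately show ?thesis unfolding A1_def by simp
  qed
  also have "card B \<le> card (- Sf)" unfolding B_def by (rule card_image_le) simp
  also have "card (- Sf) = CARD('m) - card Sf" by (simp add: Compl_eq_Diff_UNIV card_Diff_subset)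
  finally have "CARD('m) \<le> CARD('r) + 1 + (CARD('m) - card Sf)" by simp
  moreover have "card Sf \<le> CARD('m)" by (simp add: card_mono)
  ultimately show ?thesis unfolding Sf_def[symmetric] by linarith
qed

theorem corollary3p1:
  fixes f :: "real^'n \<Rightarrow> ereal"
    and X :: "real^'m^'n"
    and U :: "real^'r^'n" and S :: "real^'r^'r" and V :: "real^'r^'m"
    and gam lam :: real
    and vs us :: "real^'m" and ts :: ereal
  assumes f_range: "\<forall>x. f x \<noteq> -\<infinity>"
    and f_closed: "closed_fun f"
    and f_convex: "convex_fun f"
    and svd: "compact_svd X U S V"
    and gamma_pos: "gam > 0" and lambda_pos: "lam > 0"
    and us_box: "us \<in> unit_box"
    and ts_def: "ts = relax_obj f X gam lam vs us"
    and opt: "\<forall>v. \<forall>u\<in>unit_box. ts \<le> relax_obj f X gam lam v u"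
  shows "AE c in std_gaussian.
    (let L = S ** transpose V; zs = L *v (Dmat us *v vs) in
     \<forall>ub. lp_optimal_bfs c (f (U *v zs)) ts gam lam vs L zs ub \<longrightarrow>
       (let Sf = {i. ub $ i \<noteq> 0 \<and> ub $ i \<noteq> 1};
            ut = (\<chi> i. if i \<in> Sf then 1 else ub $ i);
            vt = (\<chi> i. if i \<in> Sf then ub $ i * vs $ i else vs $ i);
            w = Dmat ut *v vt;
            OPT = f (X *v w) + ereal (gam/2 * (norm w)^2) + ereal (lam * (\<Sum>i\<in>UNIV. ut $ i))
        in p_pen_relax f X gam lam \<le> p_pen f X gam lam
           \<and> p_pen f X gam lam \<le> OPT
           \<and> OPT \<le> p_pen_relax f X gam lam + ereal (lam * (real (rank X) + 1))))"
  proof (rule AE_I2)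
  fix c :: "real^'m"
  define L where "L = S ** transpose V"
  define zs where "zs = L *v (Dmat us *v vs)"
  have rk: "rank X = CARD('r)" and Xeq: "X = U ** S ** transpose V"
    using svd unfolding compact_svd_def by auto
  have XL: "X = U ** L" unfolding Xeq L_def by (simp add: matrix_mul_assoc)
  have ts_le: "ts \<le> p_pen_relax f X gam lam"
    unfolding p_pen_relax_def using opt by (auto intro!: INF_greatest)
  have main: "p_pen_relax f X gam lam \<le> p_pen f X gam lam
           \<and> p_pen f X gam lam \<le> OPT
           \<and> OPT \<le> p_pen_relax f X gam lam + ereal (lam * (real (rank X) + 1))"
    if bfs: "lp_optimal_bfs c (f (U *v zs)) ts gam lam vs L zs ub"
      and Sf_def: "Sf = {i. ub $ i \<noteq> 0 \<and> ub $ i \<noteq> 1}"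
      and ut_def: "ut = (\<chi> i. if i \<in> Sf then 1 else ub $ i)"
      and vt_def: "vt = (\<chi> i. if i \<in> Sf then ub $ i * vs $ i else vs $ i)"
      and w_def: "w = Dmat ut *v vt"
      and OPT_def: "OPT = f (X *v w) + ereal (gam/2 * (norm w)^2) + ereal (lam * (\<Sum>i\<in>UNIV. ut $ i))"
    for ub Sf ut vt w OPT
  proof -
    have F1: "f (U *v zs) + ereal (\<Sum>i\<in>UNIV. ub $ i * (gam/2) * (vs $ i)^2 + lam * ub $ i) = ts"
      and F2: "(\<Sum>i\<in>UNIV. (ub $ i * vs $ i) *\<^sub>R column i L) = zs"
      and F3: "ub \<in> unit_box"
      and sp: "span ({\<chi> i. (gam/2) * (vs $ i)^2 + lam}
           \<union> {(\<chi> i. L $ k $ i * vs $ i) | k. True}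
           \<union> {axis i 1 | i. ub $ i = 0 \<or> ub $ i = 1}) = UNIV"
      using bfs unfolding lp_optimal_bfs_def lp_bfs_def lp_feasible_def by auto
    have ub01: "0 \<le> ub $ i" "ub $ i \<le> 1" for i using F3 unfolding unit_box_def by auto
    have ut01: "\<forall>i. ut $ i = 0 \<or> ut $ i = 1" unfolding ut_def Sf_def by auto
    have wc: "w $ i = ub $ i * vs $ i" for i
      unfolding w_def ut_def vt_def Sf_def by (auto simp: Dmat_mult)
    have "L *v w = (\<Sum>i\<in>UNIV. (w $ i) *\<^sub>R column i L)"
      by (simp only: matrix_mult_sum scalar_mult_eq_scaleR)
    hence "L *v w = zs" using F2 by (simp add: wc)
    hence Xw: "X *v w = U *v zs" unfolding XL by (simp add: matrix_vector_mul_assoc[symmetric])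
    have nw: "(norm w)^2 \<le> (\<Sum>i\<in>UNIV. ub $ i * (vs $ i)^2)"
      unfolding norm_sq_vec
    proof (rule sum_mono)
      fix i
      have "ub $ i * ub $ i \<le> ub $ i" using ub01[of i] by (simp add: mult_left_le)
      hence "(ub $ i * ub $ i) * (vs $ i)^2 \<le> ub $ i * (vs $ i)^2"
        by (rule mult_right_mono) simp
      thus "(w $ i)^2 \<le> ub $ i * (vs $ i)^2" by (simp add: wc power2_eq_square algebra_simps)
    qed
    have cS: "real (card Sf) = (\<Sum>i\<in>UNIV. if i \<in> Sf then 1 else 0)"
      by (simp add: sum.If_cases)
    have sut: "(\<Sum>i\<in>UNIV. ut $ i) \<le> (\<Sum>i\<in>UNIV. ub $ i) + real (card Sf)"
      unfolding cS sum.distrib[symmetric] by (rule sum_mono) (use ub01 in \<open>auto simp: ut_def\<close>)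
    have cSf: "card Sf \<le> CARD('r) + 1"
      unfolding Sf_def by (rule card_Sf_bound[OF sp])
    have "gam/2 * (norm w)^2 + lam * (\<Sum>i\<in>UNIV. ut $ i)
        \<le> gam/2 * (\<Sum>i\<in>UNIV. ub $ i * (vs $ i)^2) + lam * ((\<Sum>i\<in>UNIV. ub $ i) + real (card Sf))"
      using nw sut gamma_pos lambda_pos by (intro add_mono mult_left_mono) auto
    also have "\<dots> = (\<Sum>i\<in>UNIV. ub $ i * (gam/2) * (vs $ i)^2 + lam * ub $ i) + lam * real (card Sf)"
      by (simp add: sum.distrib sum_distrib_left algebra_simps)
    also have "\<dots> \<le> (\<Sum>i\<in>UNIV. ub $ i * (gam/2) * (vs $ i)^2 + lam * ub $ i) + lam * (real (rank X) + 1)"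
      using cSf lambda_pos rk by (intro add_left_mono mult_left_mono) auto
    finally have ineq: "gam/2 * (norm w)^2 + lam * (\<Sum>i\<in>UNIV. ut $ i)
        \<le> (\<Sum>i\<in>UNIV. ub $ i * (gam/2) * (vs $ i)^2 + lam * ub $ i) + lam * (real (rank X) + 1)" .
    have "OPT = f (U *v zs) + ereal (gam/2 * (norm w)^2 + lam * (\<Sum>i\<in>UNIV. ut $ i))"
      unfolding OPT_def Xw by (simp add: add.assoc)
    also have "\<dots> \<le> f (U *v zs) + ereal ((\<Sum>i\<in>UNIV. ub $ i * (gam/2) * (vs $ i)^2 + lam * ub $ i) + lam * (real (rank X) + 1))"
      using ineq by (intro add_left_mono) simp
    also have "\<dots> = ts + ereal (lam * (real (rank X) + 1))"
      unfolding F1[symmetric] by (simp add: add.assoc)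
    also have "\<dots> \<le> p_pen_relax f X gam lam + ereal (lam * (real (rank X) + 1))"
      using ts_le by (rule add_right_mono)
    finally have c3: "OPT \<le> p_pen_relax f X gam lam + ereal (lam * (real (rank X) + 1))" .
    have c2: "p_pen f X gam lam \<le> OPT"
      unfolding OPT_def w_def by (rule pen_le[OF ut01 lambda_pos])
    show ?thesis using relax_le_pen c2 c3 by blast
  qed
  show "let L = S ** transpose V; zs = L *v (Dmat us *v vs) in
     \<forall>ub. lp_optimal_bfs c (f (U *v zs)) ts gam lam vs L zs ub \<longrightarrow>
       (let Sf = {i. ub $ i \<noteq> 0 \<and> ub $ i \<noteq> 1};
            ut = (\<chi> i. if i \<in> Sf then 1 else ub $ i);
            vt = (\<chi> i. if i \<in> Sf then ub $ i * vs $ i else vs $ i);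
            w = Dmat ut *v vt;
            OPT = f (X *v w) + ereal (gam/2 * (norm w)^2) + ereal (lam * (\<Sum>i\<in>UNIV. ut $ i))
        in p_pen_relax f X gam lam \<le> p_pen f X gam lam
           \<and> p_pen f X gam lam \<le> OPT
           \<and> OPT \<le> p_pen_relax f X gam lam + ereal (lam * (real (rank X) + 1)))"
    unfolding Let_def L_def[symmetric] zs_def[symmetric]
    using main[OF _ refl refl refl refl refl] by blast
qed

end
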